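(* Let $K$ and $K'$ be two CMIs. Then $\mathrm{can}(\mathrm{pur}(K))=\mathrm{can}(\mathrm{pur}(K'))$ if and only if $K'$ is a sub-CMI of $K$ and $K$ is a sub-CMI of $K'$.
   Context: Setting: $X_1,\dots,X_n$ jointly distributed discrete random variables with $H(X_i)<\infty$; distribution unspecified. $X_\alpha=(X_i,i\in\alpha)$, $X_\emptyset$ constant. A CMI is $K=(C,\langle Q_1,\dots,Q_k\rangle)$, $k\ge0$, $C\subseteq\{1,\dots,n\}$, $\langle\cdot\rangle$ an unordered multiset of subsets; valid (for a given distribution) if $\sum_iH(X_{Q_i}|X_C)-H(X_{Q_1},\dots,X_{Q_k}|X_C)=0$. Empty members may be deleted; equality of CMIs means equal conditioning sets and equal multisets. Degenerate = valid for every distribution; all degenerate CMIs are identified and written $(\cdot,\langle\ \rangle)$. $\mathrm{pur}(K)=(C,\langle Q_i\setminus C:Q_i\setminus C\ne\emptyset\rangle)$. For pure $K$: $\mathbb I_K$ = indices lying in at least two members of the collection if $k\ge2$, else $\emptyset$; $P_1,\dots,P_t$ the nonempty sets among $Q_i\setminus\mathbb I_K$; $\mathrm{can}(K)=(\cdot,\langle\ \rangle)$ if $k\le1$, $(C,\langle\mathbb I_K,\mathbb I_K\rangle)$ if $k\ge2,\mathbb I_K\ne\emptyset,t\le1$, $(C,\langle P_1..P_t\rangle)$ if $k\ge2,\mathbb I_K=\emptyset$, $(C,\langle\mathbb I_K,\mathbb I_K,P_1..P_t\rangle)$ if $k\ge2,\mathbb I_K\ne\emptyset,t\ge2$. For general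 $K$, $\mathbb I_K$ is the repeated-index set of $\mathrm{pur}(K)$ and $\mathrm{can}(\mathrm{pur}(K))$ is written $(C,\langle\mathbb I_K,\mathbb I_K,P_i,1\le i\le t\rangle)$ (copies of $\mathbb I_K$ omitted if empty; degenerate $K$ has $\mathbb I_K=\emptyset$, $t\in\{0,1\}$). $P=\bigcup_iP_i$, $S=C\cup P$. $R_K^{K'}$: with $\mathrm{can}(\mathrm{pur}(K'))=(C',\langle\mathbb I_{K'},\mathbb I_{K'},P'_j,1\le j\le s\rangle)$, $D=\mathbb I_{K'}\setminus\mathbb I_K$ and $T_1,\dots,T_u$ the nonempty sets among $P'_j\setminus\mathbb I_K$: $R_K^{K'}=(\cdot,\langle\ \rangle)$ if $D=\emptyset,u\le1$; $(C'\setminus\mathbb I_K,\langle T_1..T_u\rangle)$ if $D=\emptyset,u\ge2$; $(C'\setminus\mathbb I_K,\langle D,D\rangle)$ if $D\ne\emptyset,u\le1$; $(C'\setminus\mathbb I_K,\langle D,D,T_1..T_u\rangle)$ if $D\ne\emptyset,u\ge2$. Sub-CMI: with $K''=R_K^{K'}$, $\mathrm{can}(\mathrm{pur}(K''))=(C'',\langle\mathbb I_{K''},\mathbb I_{K''},P''_j,1\le j\le r\rangle)$, $P''=\bigcup_jP''_j$, $K'$ is a sub-CMI of $K$ if: (i) $K'=(\cdot,\langle\ \rangle)$; or (ii) $\mathrm{can}(\mathrm{pur}(K''))=(\cdot,\langle\ \rangle)$ and $C\subseteq C'$; or (iii) $\mathrm{can}(\mathrm{pur}(K''))\ne(\cdot,\langle\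 \rangle)$, $\mathbb I_{K''}=\emptyset$, $P''\subseteq P$, $C\subseteq C''\subseteq S\setminus P''$, and whenever $m_1\in P''_{j_1}$, $m_2\in P''_{j_2}$ with $j_1\ne j_2$, then $m_1\in P_{i_1}$, $m_2\in P_{i_2}$ with $i_1\ne i_2$. *)

theory Defs
  imports Main "HOL-Library.Multiset"
begin

text \<open>A CMI is either the (identified) degenerate CMI, or a pair (C, multiset of members).
  Indices are natural numbers (random variables X_1..X_n).\<close>
datatype cmi = Deg | CMI "nat set" "nat set multiset"

definition cmi_wf :: "nat \<Rightarrow> cmi \<Rightarrow> bool" where
  "cmi_wf n K = (case K of Deg \<Rightarrow> True
     | CMI C Qs \<Rightarrow> C \<subseteq> {1..n} \<and> (\<forall>Q\<in>#Qs. Q \<subseteq> {1..n}))"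

fun pur :: "cmi \<Rightarrow> cmi" where
  "pur Deg = Deg"
| "pur (CMI C Qs) = CMI C (filter_mset (\<lambda>Q. Q \<noteq> {}) (image_mset (\<lambda>Q. Q - C) Qs))"

fun cond :: "cmi \<Rightarrow> nat set" where
  "cond Deg = {}"
| "cond (CMI C Qs) = C"

fun mems :: "cmi \<Rightarrow> nat set multiset" where
  "mems Deg = {#}"
| "mems (CMI C Qs) = Qs"

definition rep_idx :: "nat set multiset \<Rightarrow> nat set" where
  "rep_idx Qs = (if size Qs \<ge> 2
     then {i. size (filter_mset (\<lambda>Q. i \<in> Q) Qs) \<ge> 2} else {})"

definition strip :: "nat set \<Rightarrow> nat set multiset \<Rightarrow> nat set multiset" where
  "strip I Qs = filter_mset (\<lambda>Q. Q \<noteq> {}) (image_mset (\<lambda>Q. Q - I) Qs)"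

fun can :: "cmi \<Rightarrow> cmi" where
  "can Deg = Deg"
| "can (CMI C Qs) =
     (if size Qs \<le> 1 then Deg
      else (let I = rep_idx Qs; Ps = strip I Qs in
            if I \<noteq> {} \<and> size Ps \<le> 1 then CMI C {#I, I#}
            else if I = {} then CMI C Ps
            else CMI C ({#I, I#} + Ps)))"

text \<open>Degenerate CMIs (valid for every distribution): those whose purification has at
  most one member; they are all identified with Deg.\<close>
definition degenerate :: "cmi \<Rightarrow> bool" where
  "degenerate K \<longleftrightarrow> size (mems (pur K)) \<le> 1"

definition II :: "cmi \<Rightarrow> nat set" where
  "II K = rep_idx (mems (pur K))"

text \<open>The sets P_1..P_t in the written form can(pur K) = (C,<I_K,I_K,P_i>).
  For degenerate K: I_K = {} and the P_i are the (at most one) nonempty members of pur(K).\<close>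
definition PPs :: "cmi \<Rightarrow> nat set multiset" where
  "PPs K = (if degenerate K then mems (pur K)
            else (let Ps = strip (II K) (mems (pur K)) in
                  if II K \<noteq> {} \<and> size Ps \<le> 1 then {#} else Ps))"

definition PP :: "cmi \<Rightarrow> nat set" where
  "PP K = \<Union> (set_mset (PPs K))"

definition SS :: "cmi \<Rightarrow> nat set" where
  "SS K = cond K \<union> PP K"

definition RR :: "cmi \<Rightarrow> cmi \<Rightarrow> cmi" where
  "RR K K' = (let D = II K' - II K; Ts = strip (II K) (PPs K'); C0 = cond K' - II K in
     if D = {} \<and> size Ts \<le> 1 then Deg
     else if D = {} then CMI C0 Ts
     else if size Ts \<le> 1 then CMI C0 {#D, D#}
     else CMI C0 ({#D, D#} + Ts))"

definition sub_cmi :: "cmi \<Rightarrow> cmi \<Rightarrow> bool" where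
  "sub_cmi K' K \<longleftrightarrow>
     (let K'' = RR K K' in
      degenerate K'
      \<or> (can (pur K'') = Deg \<and> cond K \<subseteq> cond K')
      \<or> (can (pur K'') \<noteq> Deg \<and> II K'' = {} \<and> PP K'' \<subseteq> PP K
         \<and> cond K \<subseteq> cond K'' \<and> cond K'' \<subseteq> SS K - PP K''
         \<and> (\<forall>A B m1 m2. {#A, B#} \<subseteq># PPs K'' \<and> m1 \<in> A \<and> m2 \<in> B \<longrightarrow>
              (\<exists>A' B'. {#A', B'#} \<subseteq># PPs K \<and> m1 \<in> A' \<and> m2 \<in> B'))))"

end

theory Submission
  imports Defs
begin

definition cnt :: "nat \<Rightarrow> nat set multiset \<Rightarrow> nat" where
  "cnt x M = size (filter_mset (\<lambda>A. x \<in> A) M)"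

definition dbl :: "nat set \<Rightarrow> nat set multiset" where
  "dbl I = (if I = {} then {#} else {#I, I#})"

lemma cnt_strip: "cnt x (strip I Q) = (if x \<in> I then 0 else cnt x Q)"
proof -
  have e1: "filter_mset (\<lambda>A. x \<in> A) (strip I Q) =
        filter_mset (\<lambda>A. x \<in> A) (image_mset (\<lambda>A. A - I) Q)"
    unfolding strip_def filter_filter_mset by (rule filter_mset_cong) auto
  have e2: "filter_mset (\<lambda>A. x \<in> A) (image_mset (\<lambda>A. A - I) Q) =
        image_mset (\<lambda>A. A - I) (filter_mset (\<lambda>A. x \<in> A - I) Q)"
    by (rule filter_mset_image_mset)
  have e3: "filter_mset (\<lambda>A. x \<in> A - I) Q =
     (if x \<in> I then {#} else filter_mset (\<lambda>A. x \<in> A) Q)"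
    by (cases "x \<in> I") (auto intro: filter_mset_cong)
  show ?thesis unfolding cnt_def e1 e2 e3 by simp
qed

lemma rep_idx_cnt: "x \<notin> rep_idx Q \<Longrightarrow> cnt x Q \<le> 1"
proof -
  assume a: "x \<notin> rep_idx Q"
  show ?thesis
  proof (cases "size Q \<ge> 2")
    case True then show ?thesis using a unfolding rep_idx_def cnt_def by auto
  next
    case False
    have "cnt x Q \<le> size Q" unfolding cnt_def by (rule size_filter_mset_lesseq)
    then show ?thesis using False by auto
  qed
qed

lemma cnt_ge2: "{#A, B#} \<subseteq># M \<Longrightarrow> x \<in> A \<Longrightarrow> x \<in> B \<Longrightarrow> cnt x M \<ge> 2"
proof -
  assume h: "{#A, B#} \<subseteq># M" "x \<in> A" "x \<in> B"
  have "filter_mset (\<lambda>A. x \<in> A) {#A, B#} \<subseteq># filter_mset (\<lambda>A. x \<in> A) M"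
    using h(1) by (rule multiset_filter_mono)
  then have "size (filter_mset (\<lambda>A. x \<in> A) {#A, B#}) \<le> cnt x M"
    unfolding cnt_def by (rule size_mset_mono)
  then show ?thesis using h by simp
qed

lemma pair_sub: "a \<noteq> b \<Longrightarrow> a \<in># M \<Longrightarrow> b \<in># M \<Longrightarrow> {#a, b#} \<subseteq># M"
proof -
  assume h: "a \<noteq> b" "a \<in># M" "b \<in># M"
  obtain M' where M': "M = add_mset a M'" using h(2) by (blast dest: multi_member_split)
  then have "b \<in># M'" using h by simp
  then have "{#b#} \<subseteq># M'" by simp
  then show ?thesis using M' by simp
qed

lemma uniq_blk: "\<forall>x. cnt x M \<le> 1 \<Longrightarrow> A \<in># M \<Longrightarrow> B \<in># M \<Longrightarrow> x \<in> A \<Longrightarrow> x \<in> B \<Longrightarrow> A = B"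
proof (rule ccontr)
  assume h: "\<forall>x. cnt x M \<le> 1" "A \<in># M" "B \<in># M" "x \<in> A" "x \<in> B" "A \<noteq> B"
  have "{#A, B#} \<subseteq># M" using pair_sub[OF h(6) h(2) h(3)] .
  then have "cnt x M \<ge> 2" using cnt_ge2 h(4,5) by blast
  moreover have "cnt x M \<le> 1" using h(1) by blast
  ultimately show False by simp
qed

lemma no_dbl: "\<forall>x. cnt x M \<le> 1 \<Longrightarrow> {#A, A#} \<subseteq># M \<Longrightarrow> x \<in> A \<Longrightarrow> False"
proof -
  assume h: "\<forall>x. cnt x M \<le> 1" "{#A, A#} \<subseteq># M" "x \<in> A"
  then have "cnt x M \<ge> 2" using cnt_ge2 h(2,3) by blast
  moreover have "cnt x M \<le> 1" using h(1) by blast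
  ultimately show False by simp
qed

lemma size2_pair: "size M \<ge> 2 \<Longrightarrow> \<exists>A B. {#A, B#} \<subseteq># M"
proof -
  assume "size M \<ge> 2"
  then have "M \<noteq> {#}" by auto
  then obtain A where A: "A \<in># M" by blast
  then obtain M' where M': "M = add_mset A M'" by (blast dest: multi_member_split)
  then have "size M' \<ge> 1" using \<open>size M \<ge> 2\<close> by simp
  then have "M' \<noteq> {#}" by auto
  then obtain B where "B \<in># M'" by blast
  then have "{#B#} \<subseteq># M'" by simp
  then have "{#A, B#} \<subseteq># M" using M' by simp
  then show ?thesis by blast
qed


lemma rep_idx_zero: "\<forall>x. cnt x M \<le> 1 \<Longrightarrow> rep_idx M = {}"
proof -
  assume h: "\<forall>x. cnt x M \<le> 1"
  { fix i have "cnt i M \<le> 1" using h by blast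
    then have "\<not> 2 \<le> cnt i M" by simp }
  then show ?thesis by (auto simp: rep_idx_def cnt_def)
qed

lemma strip_id: "\<forall>A\<in>#M. A \<noteq> {} \<and> A \<inter> I = {} \<Longrightarrow> strip I M = M"
proof -
  assume h: "\<forall>A\<in>#M. A \<noteq> {} \<and> A \<inter> I = {}"
  have "image_mset (\<lambda>Q. Q - I) M = image_mset id M"
    by (rule image_mset_cong) (use h in \<open>simp add: Diff_triv\<close>)
  then have e: "image_mset (\<lambda>Q. Q - I) M = M" by simp
  have "filter_mset (\<lambda>Q. Q \<noteq> {}) M = filter_mset (\<lambda>Q. True) M"
    by (rule filter_mset_cong) (use h in auto)
  then show ?thesis unfolding strip_def e by simp
qed

lemma strip_mem: "A \<in># strip I Q \<Longrightarrow> \<exists>B. B \<in># Q \<and> A = B - I \<and> A \<noteq> {}"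
  unfolding strip_def by auto

lemma pur_CMI: "pur (CMI C Qs) = CMI C (strip C Qs)"
  by (simp add: strip_def)

lemma pur_mems: "A \<in># mems (pur K) \<Longrightarrow> A \<noteq> {} \<and> A \<inter> cond K = {}"
  by (cases K) auto

lemma cond_pur: "cond (pur K) = cond K"
  by (cases K) auto

lemma can_Deg_iff: "can (pur K) = Deg \<longleftrightarrow> degenerate K"
proof (cases K)
  case Deg then show ?thesis by (simp add: degenerate_def)
next
  case (CMI C Qs)
  then show ?thesis by (simp add: degenerate_def Let_def)
qed

lemma deg_facts: "degenerate K \<Longrightarrow> II K = {} \<and> size (PPs K) \<le> 1 \<and> PPs K = mems (pur K)"
  unfolding degenerate_def II_def PPs_def rep_idx_def by auto

lemma PPs_mem: "A \<in># PPs K \<Longrightarrow> A \<noteq> {} \<and> A \<inter> cond K = {} \<and> A \<inter> II K = {}"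
proof (cases "degenerate K")
  case True
  assume "A \<in># PPs K"
  then show ?thesis using True deg_facts[OF True] pur_mems by auto
next
  case False
  assume a: "A \<in># PPs K"
  then have "A \<in># strip (II K) (mems (pur K))"
    using False unfolding PPs_def Let_def by (auto split: if_splits)
  then obtain B where "B \<in># mems (pur K)" "A = B - II K" "A \<noteq> {}" using strip_mem by blast
  then show ?thesis using pur_mems by blast
qed

lemma PPs_all: "\<forall>A\<in>#PPs K. A \<noteq> {} \<and> A \<inter> cond K = {} \<and> A \<inter> II K = {}"
  using PPs_mem by blast

lemma PPs_cnt: "cnt x (PPs K) \<le> 1"
proof (cases "degenerate K")
  case True
  have "cnt x (PPs K) \<le> size (PPs K)" unfolding cnt_def by (rule size_filter_mset_lesseq)
  then show ?thesis using deg_facts[OF True] by linarith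
next
  case False
  show ?thesis
  proof (cases "PPs K = {#}")
    case True then show ?thesis by (simp add: cnt_def)
  next
    case F2: False
    then have e: "PPs K = strip (II K) (mems (pur K))"
      using False unfolding PPs_def Let_def by (auto split: if_splits)
    show ?thesis unfolding e cnt_strip using rep_idx_cnt[of x "mems (pur K)"]
      by (simp add: II_def)
  qed
qed

lemma II_cond: "II K \<inter> cond K = {}"
proof -
  { fix x assume x: "x \<in> II K"
    then have "size (filter_mset (\<lambda>Q. x \<in> Q) (mems (pur K))) \<ge> 2"
      unfolding II_def rep_idx_def by (auto split: if_splits)
    then have "filter_mset (\<lambda>Q. x \<in> Q) (mems (pur K)) \<noteq> {#}" by (metis not_numeral_le_zero size_empty)
    then obtain B where "B \<in># filter_mset (\<lambda>Q. x \<in> Q) (mems (pur K))" by blast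
    then have "B \<in># mems (pur K)" "x \<in> B" by simp_all
    then have "x \<notin> cond K" using pur_mems by blast }
  then show ?thesis by blast
qed

lemma nondeg_II_empty: "\<not> degenerate K \<Longrightarrow> II K = {} \<Longrightarrow> size (PPs K) \<ge> 2"
proof -
  assume a: "\<not> degenerate K" "II K = {}"
  have "strip {} (mems (pur K)) = mems (pur K)"
    by (rule strip_id) (use pur_mems in blast)
  then have "PPs K = mems (pur K)" using a unfolding PPs_def Let_def by simp
  then show ?thesis using a unfolding degenerate_def by simp
qed

lemma nondeg_small: "\<not> degenerate K \<Longrightarrow> size (PPs K) \<le> 1 \<Longrightarrow> PPs K = {#} \<and> II K \<noteq> {}"
proof -
  assume a: "\<not> degenerate K" "size (PPs K) \<le> 1"
  then have "II K \<noteq> {}" using nondeg_II_empty by fastforce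
  then show ?thesis using a unfolding PPs_def Let_def by (auto split: if_splits)
qed

lemma nondeg_can: "\<not> degenerate K \<Longrightarrow> can (pur K) = CMI (cond K) (dbl (II K) + PPs K)"
proof (cases K)
  case Deg
  assume "\<not> degenerate K" then show ?thesis using Deg by (simp add: degenerate_def)
next
  case (CMI C Qs)
  assume a: "\<not> degenerate K"
  then show ?thesis using CMI
    by (simp add: degenerate_def Let_def PPs_def II_def dbl_def)
qed


lemma cnt_dbl: "cnt x (dbl I) = (if x \<in> I then 2 else 0)"
  unfolding cnt_def dbl_def by auto

lemma cnt_plus: "cnt x (M + N) = cnt x M + cnt x N"
  unfolding cnt_def by simp

lemma rep_dbl:
  assumes "\<forall>A\<in>#P. A \<inter> I = {}" "\<forall>x. cnt x P \<le> 1"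
  shows "rep_idx (dbl I + P) = I"
proof (cases "I = {}")
  case True
  then show ?thesis using rep_idx_zero[of P] assms by (simp add: dbl_def)
next
  case False
  have sz: "size (dbl I + P) \<ge> 2" using False by (simp add: dbl_def)
  have cP: "x \<in> I \<Longrightarrow> cnt x P = 0" for x
    using assms(1) unfolding cnt_def by (auto simp: filter_mset_eq_conv)
  show ?thesis
  proof (rule set_eqI)
    fix x
    have "cnt x (dbl I + P) = (if x \<in> I then 2 else cnt x P)"
      using cP cnt_dbl cnt_plus by simp
    then show "x \<in> rep_idx (dbl I + P) \<longleftrightarrow> x \<in> I"
      using sz assms(2)[rule_format, of x] unfolding rep_idx_def cnt_def
      by (auto split: if_splits)
  qed
qed

lemma lemA:
  assumes "{#D, D#} \<subseteq># M" "D \<noteq> {}" "D \<inter> C0 = {}"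
  shows "\<not> degenerate (CMI C0 M) \<and> II (CMI C0 M) \<noteq> {}"
proof -
  have "image_mset (\<lambda>Q. Q - C0) {#D, D#} \<subseteq># image_mset (\<lambda>Q. Q - C0) M"
    using assms(1) by (rule image_mset_subseteq_mono)
  then have "{#D, D#} \<subseteq># image_mset (\<lambda>Q. Q - C0) M" using assms(3) by (simp add: Diff_triv)
  then have "filter_mset (\<lambda>Q. Q \<noteq> {}) {#D, D#} \<subseteq># strip C0 M"
    unfolding strip_def by (rule multiset_filter_mono)
  then have s: "{#D, D#} \<subseteq># strip C0 M" using assms(2) by simp
  have e: "mems (pur (CMI C0 M)) = strip C0 M" by (simp add: strip_def)
  have sz: "size (strip C0 M) \<ge> 2" using size_mset_mono[OF s] by simp
  obtain x where x: "x \<in> D" using assms(2) by blast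
  have "cnt x (strip C0 M) \<ge> 2" using cnt_ge2[OF s x x] .
  then have "x \<in> rep_idx (strip C0 M)" using sz unfolding rep_idx_def cnt_def by simp
  then show ?thesis using sz e unfolding degenerate_def II_def by auto
qed

lemma lemB:
  assumes "\<forall>A\<in>#Ts. A \<noteq> {} \<and> A \<inter> C0 = {}" "\<forall>x. cnt x Ts \<le> 1" "size Ts \<ge> 2"
  shows "pur (CMI C0 Ts) = CMI C0 Ts \<and> \<not> degenerate (CMI C0 Ts) \<and> II (CMI C0 Ts) = {}
         \<and> PPs (CMI C0 Ts) = Ts \<and> cond (CMI C0 Ts) = C0"
proof -
  have p: "pur (CMI C0 Ts) = CMI C0 Ts" using strip_id[OF assms(1)] unfolding pur_CMI by simp
  have nd: "\<not> degenerate (CMI C0 Ts)" using p assms(3) by (simp add: degenerate_def)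
  have ii: "II (CMI C0 Ts) = {}" using p rep_idx_zero[OF assms(2)] by (simp add: II_def)
  have "strip {} Ts = Ts" by (rule strip_id) (use assms(1) in auto)
  then have "PPs (CMI C0 Ts) = Ts" using p nd ii by (simp add: PPs_def)
  then show ?thesis using p nd ii by simp
qed


lemma Ts_mem: "\<forall>A\<in>#strip I (PPs K'). A \<noteq> {} \<and> A \<inter> (cond K' - I) = {}"
proof
  fix A assume "A \<in># strip I (PPs K')"
  then obtain B where "B \<in># PPs K'" "A = B - I" "A \<noteq> {}" using strip_mem by blast
  then show "A \<noteq> {} \<and> A \<inter> (cond K' - I) = {}" using PPs_mem by blast
qed

lemma Ts_cnt: "\<forall>x. cnt x (strip I (PPs K')) \<le> 1"
  using cnt_strip PPs_cnt by simp

lemma RR_eq: "RR K K' = (let D = II K' - II K; Ts = strip (II K) (PPs K'); C0 = cond K' - II K in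
     if D = {} \<and> size Ts \<le> 1 then Deg
     else if D = {} then CMI C0 Ts
     else CMI C0 (dbl D + (if size Ts \<le> 1 then {#} else Ts)))"
  unfolding RR_def Let_def dbl_def by simp

lemma RR_D:
  assumes "II K' - II K \<noteq> {}"
  shows "\<not> degenerate (RR K K') \<and> II (RR K K') \<noteq> {}"
proof -
  let ?D = "II K' - II K" and ?Ts = "strip (II K) (PPs K')" and ?C0 = "cond K' - II K"
  have e: "RR K K' = CMI ?C0 ({#?D, ?D#} + (if size ?Ts \<le> 1 then {#} else ?Ts))"
    using assms unfolding RR_eq Let_def dbl_def by simp
  have "?D \<inter> ?C0 = {}" using II_cond[of K'] by blast
  then show ?thesis unfolding e by (intro lemA) (use assms in auto)
qed

lemma sub_nondeg:
  assumes nK: "\<not> degenerate K" and nK': "\<not> degenerate K'" and sub: "sub_cmi K' K"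
  shows "II K' \<subseteq> II K \<and> cond K \<subseteq> cond K' \<and>
    (2 \<le> size (strip (II K) (PPs K')) \<longrightarrow>
      \<Union> (set_mset (strip (II K) (PPs K'))) \<subseteq> PP K \<and>
      (\<forall>A B m1 m2. {#A, B#} \<subseteq># strip (II K) (PPs K') \<and> m1 \<in> A \<and> m2 \<in> B \<longrightarrow>
              (\<exists>A' B'. {#A', B'#} \<subseteq># PPs K \<and> m1 \<in> A' \<and> m2 \<in> B')))"
proof -
  let ?D = "II K' - II K" and ?Ts = "strip (II K) (PPs K')" and ?C0 = "cond K' - II K"
  have D: "?D = {}"
  proof (rule ccontr)
    assume "?D \<noteq> {}"
    then have "\<not> degenerate (RR K K') \<and> II (RR K K') \<noteq> {}" by (rule RR_D)
    then have "can (pur (RR K K')) \<noteq> Deg" "II (RR K K') \<noteq> {}" using can_Deg_iff by auto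
    then show False using sub nK' unfolding sub_cmi_def Let_def by auto
  qed
  show ?thesis
  proof (cases "size ?Ts \<le> 1")
    case True
    then have "RR K K' = Deg" using D unfolding RR_eq Let_def by simp
    then have "cond K \<subseteq> cond K'" using sub nK' unfolding sub_cmi_def Let_def by simp
    then show ?thesis using D True by auto
  next
    case False
    then have e: "RR K K' = CMI ?C0 ?Ts" using D unfolding RR_eq Let_def by simp
    have B: "pur (CMI ?C0 ?Ts) = CMI ?C0 ?Ts \<and> \<not> degenerate (CMI ?C0 ?Ts) \<and> II (CMI ?C0 ?Ts) = {}
         \<and> PPs (CMI ?C0 ?Ts) = ?Ts \<and> cond (CMI ?C0 ?Ts) = ?C0"
      by (rule lemB) (use Ts_mem Ts_cnt False in auto)
    then have "can (pur (CMI ?C0 ?Ts)) \<noteq> Deg" using can_Deg_iff by blast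
    then have c: "PP (CMI ?C0 ?Ts) \<subseteq> PP K \<and> cond K \<subseteq> ?C0 \<and>
         (\<forall>A B m1 m2. {#A, B#} \<subseteq># PPs (CMI ?C0 ?Ts) \<and> m1 \<in> A \<and> m2 \<in> B \<longrightarrow>
              (\<exists>A' B'. {#A', B'#} \<subseteq># PPs K \<and> m1 \<in> A' \<and> m2 \<in> B'))"
      using sub nK' unfolding sub_cmi_def Let_def e by auto
    have "PP (CMI ?C0 ?Ts) = \<Union> (set_mset ?Ts)" using B by (simp add: PP_def)
    then show ?thesis using c B D by auto
  qed
qed


lemma deg_not_sub:
  assumes dK': "degenerate K'" and nK: "\<not> degenerate K"
  shows "\<not> sub_cmi K K'"
proof
  assume sub: "sub_cmi K K'"
  have iK': "II K' = {}" using deg_facts[OF dK'] by simp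
  show False
  proof (cases "II K = {}")
    case False
    then have "II K - II K' \<noteq> {}" using iK' by simp
    then have "\<not> degenerate (RR K' K) \<and> II (RR K' K) \<noteq> {}" by (rule RR_D)
    then have "can (pur (RR K' K)) \<noteq> Deg" "II (RR K' K) \<noteq> {}" using can_Deg_iff by auto
    then show False using sub nK unfolding sub_cmi_def Let_def by auto
  next
    case True
    have sz: "size (PPs K) \<ge> 2" using nondeg_II_empty[OF nK True] .
    have st: "strip (II K') (PPs K) = PPs K"
      by (rule strip_id) (use PPs_all[of K] iK' in simp)
    have ck: "cond K - II K' = cond K" using iK' by simp
    have e: "RR K' K = CMI (cond K) (PPs K)"
      using True iK' sz unfolding RR_eq Let_def st ck by simp
    have B: "pur (CMI (cond K) (PPs K)) = CMI (cond K) (PPs K) \<and> \<not> degenerate (CMI (cond K) (PPs K))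
         \<and> II (CMI (cond K) (PPs K)) = {}
         \<and> PPs (CMI (cond K) (PPs K)) = PPs K \<and> cond (CMI (cond K) (PPs K)) = cond K"
      using PPs_all[of K] PPs_cnt[of _ K] sz by (intro lemB) simp_all
    then have "can (pur (CMI (cond K) (PPs K))) \<noteq> Deg" using can_Deg_iff by blast
    then have c: "\<forall>A B m1 m2. {#A, B#} \<subseteq># PPs K \<and> m1 \<in> A \<and> m2 \<in> B \<longrightarrow>
              (\<exists>A' B'. {#A', B'#} \<subseteq># PPs K' \<and> m1 \<in> A' \<and> m2 \<in> B')"
      using sub nK B unfolding sub_cmi_def Let_def e by auto
    obtain A B where AB: "{#A, B#} \<subseteq># PPs K" using size2_pair[OF sz] by blast
    then have "A \<in># PPs K" "B \<in># PPs K" by (auto dest: mset_subset_eqD)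
    then have "A \<noteq> {}" "B \<noteq> {}" using PPs_all[of K] by simp_all
    then obtain m1 m2 where "m1 \<in> A" "m2 \<in> B" by blast
    then obtain A' B' where "{#A', B'#} \<subseteq># PPs K'" using c AB by blast
    then have "size {#A', B'#} \<le> size (PPs K')" by (rule size_mset_mono)
    moreover have "size (PPs K') \<le> 1" using deg_facts[OF dK'] by blast
    ultimately show False by simp
  qed
qed

lemma same_sub:
  assumes nK: "\<not> degenerate K" and nK': "\<not> degenerate K'"
    and c: "cond K = cond K'" and i: "II K = II K'" and p: "PPs K = PPs K'"
  shows "sub_cmi K' K"
proof -
  have st: "strip (II K) (PPs K') = PPs K'"
    by (rule strip_id) (use PPs_all[of K'] i in simp)
  have ck: "cond K' - II K = cond K'" using II_cond[of K'] i by blast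
  show ?thesis
  proof (cases "size (PPs K) \<le> 1")
    case True
    then have "RR K K' = Deg" using i p unfolding RR_eq Let_def st by simp
    then show ?thesis using c unfolding sub_cmi_def Let_def by simp
  next
    case False
    then have e: "RR K K' = CMI (cond K) (PPs K)" using i p c unfolding RR_eq Let_def st ck by simp
    have B: "pur (CMI (cond K) (PPs K)) = CMI (cond K) (PPs K) \<and> \<not> degenerate (CMI (cond K) (PPs K))
         \<and> II (CMI (cond K) (PPs K)) = {}
         \<and> PPs (CMI (cond K) (PPs K)) = PPs K \<and> cond (CMI (cond K) (PPs K)) = cond K"
      using PPs_all[of K] PPs_cnt[of _ K] False by (intro lemB) simp_all
    then have "can (pur (CMI (cond K) (PPs K))) \<noteq> Deg" using can_Deg_iff by blast
    moreover have "cond K \<subseteq> SS K - PP K"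
      unfolding SS_def PP_def using PPs_all[of K] by auto
    ultimately show ?thesis using B unfolding sub_cmi_def Let_def e PP_def by auto
  qed
qed


definition pairs :: "nat set multiset \<Rightarrow> nat set multiset \<Rightarrow> bool" where
  "pairs P Q = (\<forall>A B m1 m2. {#A, B#} \<subseteq># P \<and> m1 \<in> A \<and> m2 \<in> B \<longrightarrow>
              (\<exists>A' B'. {#A', B'#} \<subseteq># Q \<and> m1 \<in> A' \<and> m2 \<in> B'))"

lemma pairsD: "pairs P Q \<Longrightarrow> {#A, B#} \<subseteq># P \<Longrightarrow> m1 \<in> A \<Longrightarrow> m2 \<in> B \<Longrightarrow>
   \<exists>A' B'. {#A', B'#} \<subseteq># Q \<and> m1 \<in> A' \<and> m2 \<in> B'"
  unfolding pairs_def by blast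

lemma part_in:
  assumes cP: "\<forall>x. cnt x P \<le> 1" and cP': "\<forall>x. cnt x P' \<le> 1"
    and nP': "\<forall>A\<in>#P'. A \<noteq> {}"
    and u1: "\<Union>(set_mset P') \<subseteq> \<Union>(set_mset P)" and u2: "\<Union>(set_mset P) \<subseteq> \<Union>(set_mset P')"
    and pr1: "pairs P' P" and pr2: "pairs P P'"
    and A: "A \<in># P'"
  shows "A \<in># P"
proof -
  obtain m where m: "m \<in> A" using nP' A by blast
  then obtain A0 where A0: "A0 \<in># P" "m \<in> A0" using u1 A by blast
  have s1: "A \<subseteq> A0"
  proof
    fix x assume x: "x \<in> A"
    then obtain B0 where B0: "B0 \<in># P" "x \<in> B0" using u1 A by blast
    show "x \<in> A0"
    proof (rule ccontr)
      assume "x \<notin> A0"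
      then have "A0 \<noteq> B0" using B0 by blast
      then have "{#A0, B0#} \<subseteq># P" using pair_sub[OF _ A0(1) B0(1)] by blast
      then obtain A' B' where ab: "{#A', B'#} \<subseteq># P'" "m \<in> A'" "x \<in> B'"
        using pairsD[OF pr2 _ A0(2) B0(2)] by blast
      have "A' \<in># P'" "B' \<in># P'" using ab(1) by (auto dest: mset_subset_eqD)
      then have "A' = A" "B' = A" using uniq_blk[OF cP' _ A] ab(2,3) m x by (metis, metis)
      then show False using no_dbl[OF cP' _ m] ab(1) by simp
    qed
  qed
  have s2: "A0 \<subseteq> A"
  proof
    fix x assume x: "x \<in> A0"
    then obtain B0 where B0: "B0 \<in># P'" "x \<in> B0" using u2 A0 by blast
    show "x \<in> A"
    proof (rule ccontr)
      assume "x \<notin> A"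
      then have "A \<noteq> B0" using B0 by blast
      then have "{#A, B0#} \<subseteq># P'" using pair_sub[OF _ A B0(1)] by blast
      then obtain A' B' where ab: "{#A', B'#} \<subseteq># P" "m \<in> A'" "x \<in> B'"
        using pairsD[OF pr1 _ m B0(2)] by blast
      have "A' \<in># P" "B' \<in># P" using ab(1) by (auto dest: mset_subset_eqD)
      then have "A' = A0" "B' = A0" using uniq_blk[OF cP _ A0(1)] ab(2,3) A0(2) x by (metis, metis)
      then show False using no_dbl[OF cP _ A0(2)] ab(1) by simp
    qed
  qed
  from s1 s2 have "A = A0" by blast
  then show ?thesis using A0 by simp
qed

lemma count_le1:
  assumes "\<forall>x. cnt x P \<le> 1" "\<forall>A\<in>#P. A \<noteq> {}"
  shows "count P A \<le> 1"
proof (rule ccontr)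
  assume "\<not> count P A \<le> 1"
  then have c: "count P A \<ge> 2" by simp
  then have "0 < count P A" by linarith
  then have "A \<in># P" by simp
  then obtain x where x: "x \<in> A" using assms(2) by blast
  have "\<forall>a. count {#A, A#} a \<le> count P a"
  proof
    fix a show "count {#A, A#} a \<le> count P a" by (cases "a = A") (use c in simp_all)
  qed
  then have "{#A, A#} \<subseteq># P" by (simp add: subseteq_mset_def)
  then show False using no_dbl[OF assms(1) _ x] by blast
qed

lemma part_eq:
  assumes cP: "\<forall>x. cnt x P \<le> 1" and cP': "\<forall>x. cnt x P' \<le> 1"
    and nP: "\<forall>A\<in>#P. A \<noteq> {}" and nP': "\<forall>A\<in>#P'. A \<noteq> {}"
    and u1: "\<Union>(set_mset P') \<subseteq> \<Union>(set_mset P)" and u2: "\<Union>(set_mset P) \<subseteq> \<Union>(set_mset P')"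
    and pr1: "pairs P' P" and pr2: "pairs P P'"
  shows "P = P'"
proof (rule multiset_eqI)
  fix A
  have i1: "A \<in># P' \<Longrightarrow> A \<in># P" using part_in[OF cP cP' nP' u1 u2 pr1 pr2] .
  have i2: "A \<in># P \<Longrightarrow> A \<in># P'" using part_in[OF cP' cP nP u2 u1 pr2 pr1] .
  have "count P A \<le> 1" "count P' A \<le> 1" using count_le1 cP cP' nP nP' by blast+
  note le = this
  show "count P A = count P' A"
  proof (cases "A \<in># P")
    case True
    then have "A \<in># P'" using i2 by blast
    then have "0 < count P A" "0 < count P' A" using True by simp_all
    then show ?thesis using le by linarith
  next
    case False
    then have "A \<notin># P'" using i1 by blast
    then show ?thesis using False by (simp add: not_in_iff)
  qed
qed


lemma PPs_eq_small:
  assumes nK: "\<not> degenerate K" and nK': "\<not> degenerate K'" and sm: "size (PPs K') \<le> 1"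
    and imp: "2 \<le> size (PPs K) \<longrightarrow> \<Union> (set_mset (PPs K)) \<subseteq> PP K'"
  shows "PPs K = PPs K'"
proof -
  have e': "PPs K' = {#}" using nondeg_small[OF nK' sm] by blast
  have "\<not> 2 \<le> size (PPs K)"
  proof
    assume "2 \<le> size (PPs K)"
    then have u: "\<Union> (set_mset (PPs K)) \<subseteq> {}" using imp e' by (simp add: PP_def)
    have "PPs K \<noteq> {#}" using \<open>2 \<le> size (PPs K)\<close> by auto
    then obtain A where A: "A \<in># PPs K" by blast
    then have "A \<noteq> {}" using PPs_all[of K] by simp
    then show False using u A by blast
  qed
  then have "size (PPs K) \<le> 1" by simp
  then have "PPs K = {#}" using nondeg_small[OF nK] by blast
  then show ?thesis using e' by simp
qed

theorem mainTheorem14: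
  fixes n :: nat and K K' :: cmi
  assumes "cmi_wf n K" and "cmi_wf n K'"
  shows "can (pur K) = can (pur K') \<longleftrightarrow> sub_cmi K' K \<and> sub_cmi K K'"
proof
  assume eq: "can (pur K) = can (pur K')"
  show "sub_cmi K' K \<and> sub_cmi K K'"
  proof (cases "degenerate K")
    case True
    then have "degenerate K'" using eq can_Deg_iff by metis
    then show ?thesis using True unfolding sub_cmi_def Let_def by simp
  next
    case False
    then have nK': "\<not> degenerate K'" using eq can_Deg_iff by metis
    have "CMI (cond K) (dbl (II K) + PPs K) = CMI (cond K') (dbl (II K') + PPs K')"
      using nondeg_can[OF False] nondeg_can[OF nK'] eq by simp
    then have c: "cond K = cond K'" and m: "dbl (II K) + PPs K = dbl (II K') + PPs K'" by simp_all
    have r1: "rep_idx (dbl (II K) + PPs K) = II K"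
      by (rule rep_dbl) (use PPs_all[of K] PPs_cnt[of _ K] in simp_all)
    have r2: "rep_idx (dbl (II K') + PPs K') = II K'"
      by (rule rep_dbl) (use PPs_all[of K'] PPs_cnt[of _ K'] in simp_all)
    have i: "II K = II K'" using r1 r2 m by simp
    then have p: "PPs K = PPs K'" using m by simp
    show ?thesis using same_sub[OF False nK' c i p] same_sub[OF nK' False c[symmetric] i[symmetric] p[symmetric]]
      by blast
  qed
next
  assume "sub_cmi K' K \<and> sub_cmi K K'"
  then have sub1: "sub_cmi K' K" and sub2: "sub_cmi K K'" by simp_all
  show "can (pur K) = can (pur K')"
  proof (cases "degenerate K")
    case dK: True
    show ?thesis
    proof (cases "degenerate K'")
      case True then show ?thesis using dK can_Deg_iff by metis
    next
      case False then show ?thesis using deg_not_sub[OF dK False] sub1 by blast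
    qed
  next
    case nK: False
    show ?thesis
    proof (cases "degenerate K'")
      case True then show ?thesis using deg_not_sub[OF True nK] sub2 by blast
    next
      case nK': False
      note s1 = sub_nondeg[OF nK nK' sub1]
      note s2 = sub_nondeg[OF nK' nK sub2]
      have i: "II K = II K'" using s1 s2 by blast
      have c: "cond K = cond K'" using s1 s2 by blast
      have st1: "strip (II K) (PPs K') = PPs K'"
        by (rule strip_id) (use PPs_all[of K'] i in simp)
      have st2: "strip (II K') (PPs K) = PPs K"
        by (rule strip_id) (use PPs_all[of K] i in simp)
      have t1: "2 \<le> size (PPs K') \<longrightarrow> \<Union> (set_mset (PPs K')) \<subseteq> PP K \<and> pairs (PPs K') (PPs K)"
        using s1 unfolding st1 pairs_def by blast
      have t2: "2 \<le> size (PPs K) \<longrightarrow> \<Union> (set_mset (PPs K)) \<subseteq> PP K' \<and> pairs (PPs K) (PPs K')"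
        using s2 unfolding st2 pairs_def by blast
      have p: "PPs K = PPs K'"
      proof (cases "size (PPs K') \<le> 1")
        case True
        show ?thesis by (rule PPs_eq_small[OF nK nK' True]) (use t2 in blast)
      next
        case F1: False
        show ?thesis
        proof (cases "size (PPs K) \<le> 1")
          case True
          show ?thesis by (rule PPs_eq_small[OF nK' nK True, symmetric]) (use t1 in blast)
        next
          case False
          then show ?thesis
            using part_eq[of "PPs K" "PPs K'"] PPs_cnt[of _ K] PPs_cnt[of _ K'] PPs_all[of K] PPs_all[of K']
              t1 t2 F1 unfolding PP_def by auto
        qed
      qed
      show ?thesis using nondeg_can[OF nK] nondeg_can[OF nK'] i c p by simp
    qed
  qed
qed

end
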